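(* Let $(I,<,\mathcal X,R,\mathrm{Mor})$ be a groupoid spine such that $R$ is symmetric and $|I|\ge 3$. Then $(I,<,\mathcal X,R,\mathrm{Mor})$ extends to a groupoid.
   Context: A groupoid spine $(I,<,\mathcal X,R,\mathrm{Mor})$ consists of a linear order $(I,<)$, nonempty sets $\mathcal X=\{X_i:i\in I\}$, a nonempty relation $R\subseteq I^2$ containing all $(i,j)$ with $i<j$, and for each $(i,j)\in R$ a nonempty set $\operatorname{Mor}(i,j)$ of bijections $X_i\to X_j$, such that: if $(i,i)\in R$ then $\mathrm{id}_{X_i}\in\operatorname{Mor}(i,i)$; if $(i,j),(j,i)\in R$ and $f\in\operatorname{Mor}(i,j)$ then $f^{-1}\in\operatorname{Mor}(j,i)$; if $(i,j),(j,k),(i,k)\in R$, $f\in\operatorname{Mor}(i,j)$, $g\in\operatorname{Mor}(j,k)$ then $g\circ f\in\operatorname{Mor}(i,k)$. $R$ is symmetric if $(i,j)\in R$ implies $(j,i)\in R$. The spine extends to a groupoid if one can define $\operatorname{Mor}(i,j)$ for $(i,j)\in I^2\setminus R$ (keeping $\operatorname{Mor}(i,j)$ unchanged for $(i,j)\in R$) so that $(I,<,\mathcal X,I^2,\mathrm{Mor})$ is a groupoid spine. *)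

theory Defs
  imports "HOL-Library.FuncSet"
begin

text \<open>The linear order on the index set I is the type class order
  of the index type 'i (so I = UNIV).
  Morphisms are bijections X i -> X j represented as extensional functions
  (value undefined outside X i), so identity, inverse and composition are
  restrict id, restrict (inv_into ...), compose. Mor i j is only relevant for
  (i,j) in R.\<close>

definition groupoid_spine ::
  "('i::linorder \<Rightarrow> 'x set) \<Rightarrow> ('i \<times> 'i) set \<Rightarrow> ('i \<Rightarrow> 'i \<Rightarrow> ('x \<Rightarrow> 'x) set) \<Rightarrow> bool" where
  "groupoid_spine X R Mor \<longleftrightarrow>
     (\<forall>i. X i \<noteq> {}) \<and>
     R \<noteq> {} \<and>
     (\<forall>i j. i < j \<longrightarrow> (i, j) \<in> R) \<and>
     (\<forall>i j. (i, j) \<in> R \<longrightarrow> Mor i j \<noteq> {} \<and>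
        (\<forall>f \<in> Mor i j. bij_betw f (X i) (X j) \<and> f \<in> extensional (X i))) \<and>
     (\<forall>i. (i, i) \<in> R \<longrightarrow> restrict id (X i) \<in> Mor i i) \<and>
     (\<forall>i j. (i, j) \<in> R \<and> (j, i) \<in> R \<longrightarrow>
        (\<forall>f \<in> Mor i j. restrict (inv_into (X i) f) (X j) \<in> Mor j i)) \<and>
     (\<forall>i j k. (i, j) \<in> R \<and> (j, k) \<in> R \<and> (i, k) \<in> R \<longrightarrow>
        (\<forall>f \<in> Mor i j. \<forall>g \<in> Mor j k. compose (X i) g f \<in> Mor i k))"

definition extends_to_groupoid ::
  "('i::linorder \<Rightarrow> 'x set) \<Rightarrow> ('i \<times> 'i) set \<Rightarrow> ('i \<Rightarrow> 'i \<Rightarrow> ('x \<Rightarrow> 'x) set) \<Rightarrow> bool" where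
  "extends_to_groupoid X R Mor \<longleftrightarrow>
     (\<exists>Mor'. (\<forall>i j. (i, j) \<in> R \<longrightarrow> Mor' i j = Mor i j) \<and> groupoid_spine X UNIV Mor')"

end

theory Submission
  imports Defs
begin

lemma bij_compose_ext:
  assumes "bij_betw f A B" "bij_betw g B C"
  shows "bij_betw (compose A g f) A C \<and> compose A g f \<in> extensional A"
proof -
  have "bij_betw (\<lambda>x. g (f x)) A C" using bij_betw_trans[OF assms] by (simp add: comp_def)
  then have "bij_betw (restrict (\<lambda>x. g (f x)) A) A C" by (simp only: bij_betw_restrict_eq)
  then show ?thesis by (simp only: compose_def compose_extensional[unfolded compose_def] conj_absorb simp_thms)
qed

lemma inv_bij:
  assumes "bij_betw f A B"
  shows "bij_betw (restrict (inv_into A f) B) B A"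
  by (simp only: bij_betw_restrict_eq bij_betw_inv_into[OF assms])

lemma L1:
  assumes "bij_betw f A B"
  shows "compose A (restrict (inv_into A f) B) f = restrict id A"
proof
  fix x show "compose A (restrict (inv_into A f) B) f x = restrict id A x"
    using assms by (auto simp: compose_def bij_betw_def inv_into_f_f)
qed

lemma L2:
  assumes "bij_betw f A B" "bij_betw h B C"
  shows "restrict (inv_into A (compose A h f)) C
     = compose C (restrict (inv_into A f) B) (restrict (inv_into B h) C)"
proof
  fix y
  show "restrict (inv_into A (compose A h f)) C y
     = compose C (restrict (inv_into A f) B) (restrict (inv_into B h) C) y"
  proof (cases "y \<in> C")
    case True
    define z where "z = inv_into B h y"
    have z: "z \<in> B" "h z = y" using assms True unfolding z_def
      by (auto simp: bij_betw_def inv_into_into f_inv_into_f)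
    define x where "x = inv_into A f z"
    have x: "x \<in> A" "f x = z" using assms z unfolding x_def
      by (auto simp: bij_betw_def inv_into_into f_inv_into_f)
    have bc: "bij_betw (compose A h f) A C" using bij_compose_ext assms by blast
    have "compose A h f x = y" using x z by (simp add: compose_def)
    then have "inv_into A (compose A h f) y = x"
      using bc x by (metis bij_betw_def inv_into_f_f)
    then show ?thesis using True z x unfolding x_def z_def by (simp add: compose_def)
  next
    case False then show ?thesis by (simp add: compose_def)
  qed
qed

lemma L3:
  assumes "bij_betw f A B" "bij_betw e B C"
  shows "compose A (compose C h (restrict (inv_into B e) C)) (compose A e f) = compose A h f"
proof
  fix x show "compose A (compose C h (restrict (inv_into B e) C)) (compose A e f) x = compose A h f x"
  proof (cases "x \<in> A")
    case True
    have fx: "f x \<in> B" by (rule bij_betw_apply[OF assms(1) True])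
    have efx: "e (f x) \<in> C" by (rule bij_betw_apply[OF assms(2) fx])
    have inv: "inv_into B e (e (f x)) = f x"
      by (rule inv_into_f_f[OF bij_betw_imp_inj_on[OF assms(2)] fx])
    have "compose A (compose C h (restrict (inv_into B e) C)) (compose A e f) x
        = compose C h (restrict (inv_into B e) C) (compose A e f x)"
      using True by (simp only: compose_def restrict_apply')
    also have "compose A e f x = e (f x)" using True by (simp only: compose_def restrict_apply')
    also have "compose C h (restrict (inv_into B e) C) (e (f x)) = h (inv_into B e (e (f x)))"
      using efx by (simp only: compose_def restrict_apply')
    also have "\<dots> = h (f x)" by (simp only: inv)
    also have "\<dots> = compose A h f x" using True by (simp only: compose_def restrict_apply')
    finally show ?thesis .
  next
    case False then show ?thesis by (simp add: compose_def)
  qed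
qed

theorem theorem7p5:
  fixes X :: "'i::linorder \<Rightarrow> 'x set"
    and R :: "('i \<times> 'i) set"
    and Mor :: "'i \<Rightarrow> 'i \<Rightarrow> ('x \<Rightarrow> 'x) set"
  assumes "groupoid_spine X R Mor"
    and "sym R"
    and "\<exists>a b c :: 'i. a \<noteq> b \<and> b \<noteq> c \<and> a \<noteq> c"
  shows "extends_to_groupoid X R Mor"
proof -
  note gs = assms(1)[unfolded groupoid_spine_def]
  have g3: "\<forall>i j. i < j \<longrightarrow> (i, j) \<in> R" using gs by (elim conjE)
  have g4: "\<forall>i j. (i, j) \<in> R \<longrightarrow> Mor i j \<noteq> {} \<and>
        (\<forall>f \<in> Mor i j. bij_betw f (X i) (X j) \<and> f \<in> extensional (X i))" using gs by (elim conjE)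
  have g5: "\<forall>i. (i, i) \<in> R \<longrightarrow> restrict id (X i) \<in> Mor i i" using gs by (elim conjE)
  have g6: "\<forall>i j. (i, j) \<in> R \<and> (j, i) \<in> R \<longrightarrow>
        (\<forall>f \<in> Mor i j. restrict (inv_into (X i) f) (X j) \<in> Mor j i)" using gs by (elim conjE)
  have g7: "\<forall>i j k. (i, j) \<in> R \<and> (j, k) \<in> R \<and> (i, k) \<in> R \<longrightarrow>
        (\<forall>f \<in> Mor i j. \<forall>g \<in> Mor j k. compose (X i) g f \<in> Mor i k)" using gs by (elim conjE)
  have offR: "(i,j) \<in> R" if "i \<noteq> j" for i j
  proof (cases "i < j")
    case True then show ?thesis using g3 by blast
  next
    case False then have "j < i" using that by simp
    then have "(j,i) \<in> R" using g3 by blast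
    then show ?thesis using assms(2) by (simp add: sym_def)
  qed
  have bijM: "bij_betw f (X i) (X j)" "f \<in> extensional (X i)" if "(i,j) \<in> R" "f \<in> Mor i j" for i j f
    using g4 that by blast+
  have neM: "Mor i j \<noteq> {}" if "(i,j) \<in> R" for i j using g4 that by blast
  have idM: "restrict id (X i) \<in> Mor i i" if "(i,i) \<in> R" for i using g5 that by blast
  have invR: "restrict (inv_into (X i) f) (X j) \<in> Mor j i" if "(i,j) \<in> R" "(j,i) \<in> R" "f \<in> Mor i j" for i j f
    using g6 that by blast
  have compR: "compose (X i) g f \<in> Mor i k" if "(i,j) \<in> R" "(j,k) \<in> R" "(i,k) \<in> R"
    "f \<in> Mor i j" "g \<in> Mor j k" for i j k f g
    using g7 that by blast
  have invM: "restrict (inv_into (X i) f) (X j) \<in> Mor j i" if "i \<noteq> j" "f \<in> Mor i j" for i j f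
    using invR[OF offR offR] that by blast
  have compM: "compose (X i) g f \<in> Mor i k" if "i \<noteq> j" "j \<noteq> k" "i \<noteq> k"
    "f \<in> Mor i j" "g \<in> Mor j k" for i j k f g
    using compR[OF offR offR offR] that by blast
  have third: "\<exists>p. p \<noteq> i \<and> p \<noteq> k" for i k :: 'i
  proof -
    obtain a b c :: 'i where abc: "a \<noteq> b" "b \<noteq> c" "a \<noteq> c" using assms(3) by blast
    show ?thesis
    proof (cases "a \<noteq> i \<and> a \<noteq> k")
      case True then show ?thesis by blast
    next
      case F1: False
      show ?thesis
      proof (cases "b \<noteq> i \<and> b \<noteq> k")
        case True then show ?thesis by blast
      next
        case False then have "c \<noteq> i \<and> c \<noteq> k" using F1 abc by auto
        then show ?thesis by blast
      qed
    qed
  qed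
  define Md where "Md i = {compose (X i) h f | f h k. k \<noteq> i \<and> f \<in> Mor i k \<and> h \<in> Mor k i}" for i
  define M where "M i j = (if (i,j) \<in> R then Mor i j else Md i)" for i j
  have reroute: "\<exists>f h. f \<in> Mor i p \<and> h \<in> Mor p i \<and> \<phi> = compose (X i) h f"
    if hyp: "\<phi> \<in> Md i" "p \<noteq> i" for \<phi> i p
  proof -
    obtain k f h where k: "k \<noteq> i" "f \<in> Mor i k" "h \<in> Mor k i" "\<phi> = compose (X i) h f"
      using hyp(1) unfolding Md_def by blast
    show ?thesis
    proof (cases "k = p")
      case True then show ?thesis using k by blast
    next
      case False
      obtain e where e: "e \<in> Mor k p" using neM[OF offR[OF False]] by blast
      have f': "compose (X i) e f \<in> Mor i p"
        using compM[OF k(1)[symmetric] False hyp(2)[symmetric] k(2) e] .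
      have h': "compose (X p) h (restrict (inv_into (X k) e) (X p)) \<in> Mor p i"
        using compM[OF False[symmetric] k(1) hyp(2) invM[OF False e] k(3)] .
      have "compose (X i) (compose (X p) h (restrict (inv_into (X k) e) (X p))) (compose (X i) e f)
          = compose (X i) h f"
        using L3[OF bijM(1)[OF offR[OF k(1)[symmetric]] k(2)] bijM(1)[OF offR[OF False] e]] .
      then show ?thesis using f' h' k(4) by (intro exI[of _ "compose (X i) e f"] exI[of _ "compose (X p) h (restrict (inv_into (X k) e) (X p))"]) simp
    qed
  qed
  have MdB: "bij_betw \<phi> (X i) (X i) \<and> \<phi> \<in> extensional (X i)" if hyp: "\<phi> \<in> Md i" for \<phi> i
  proof -
    obtain k f h where k: "k \<noteq> i" "f \<in> Mor i k" "h \<in> Mor k i" "\<phi> = compose (X i) h f"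
      using hyp(1) unfolding Md_def by blast
    show ?thesis using bij_compose_ext[OF bijM(1)[OF offR[OF k(1)[symmetric]] k(2)] bijM(1)[OF offR[OF k(1)] k(3)]] k(4)
      by simp
  qed
  have P: "compose (X i) g \<phi> \<in> Mor i k" if hyp: "\<phi> \<in> Md i" "g \<in> Mor i k" "k \<noteq> i" for \<phi> g i k
  proof -
    obtain p where p: "p \<noteq> i" "p \<noteq> k" using third by blast
    obtain f h where fh: "f \<in> Mor i p" "h \<in> Mor p i" "\<phi> = compose (X i) h f"
      using reroute[OF hyp(1) p(1)] by blast
    have "f \<in> X i \<rightarrow> X p" using bij_betw_imp_funcset[OF bijM(1)[OF offR[OF p(1)[symmetric]] fh(1)]] .
    then have eq: "compose (X i) g \<phi> = compose (X i) (compose (X p) g h) f"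
      unfolding fh(3) by (rule compose_assoc)
    have gh: "compose (X p) g h \<in> Mor p k" using compM[OF p(1) hyp(3)[symmetric] p(2) fh(2) hyp(2)] .
    show ?thesis using compM[OF p(1)[symmetric] p(2) hyp(3)[symmetric] fh(1) gh] eq by simp
  qed
  have Q: "compose (X k) \<phi> g \<in> Mor k i" if hyp: "\<phi> \<in> Md i" "g \<in> Mor k i" "k \<noteq> i" for \<phi> g i k
  proof -
    obtain p where p: "p \<noteq> i" "p \<noteq> k" using third by blast
    obtain f h where fh: "f \<in> Mor i p" "h \<in> Mor p i" "\<phi> = compose (X i) h f"
      using reroute[OF hyp(1) p(1)] by blast
    have "g \<in> X k \<rightarrow> X i" using bij_betw_imp_funcset[OF bijM(1)[OF offR[OF hyp(3)] hyp(2)]] .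
    then have eq: "compose (X k) \<phi> g = compose (X k) h (compose (X k) f g)"
      unfolding fh(3) by (rule compose_assoc[symmetric])
    have fg: "compose (X k) f g \<in> Mor k p" using compM[OF hyp(3) p(1)[symmetric] p(2)[symmetric] hyp(2) fh(1)] .
    show ?thesis using compM[OF p(2)[symmetric] p(1) hyp(3) fg fh(2)] eq by simp
  qed
  have DD: "compose (X i) \<phi>2 \<phi>1 \<in> Md i" if hyp: "\<phi>1 \<in> Md i" "\<phi>2 \<in> Md i" for \<phi>1 \<phi>2 i
  proof -
    obtain p where p: "p \<noteq> i" using third by blast
    obtain f h where fh: "f \<in> Mor i p" "h \<in> Mor p i" "\<phi>2 = compose (X i) h f"
      using reroute[OF hyp(2) p] by blast
    have "\<phi>1 \<in> X i \<rightarrow> X i" using MdB[OF hyp(1)] bij_betw_imp_funcset by blast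
    then have eq: "compose (X i) \<phi>2 \<phi>1 = compose (X i) h (compose (X i) f \<phi>1)"
      unfolding fh(3) by (rule compose_assoc[symmetric])
    have "compose (X i) f \<phi>1 \<in> Mor i p" using P[OF hyp(1) fh(1) p] .
    then show ?thesis using eq fh(2) p unfolding Md_def by blast
  qed
  have Mdid: "restrict id (X i) \<in> Md i" for i
  proof -
    obtain p where p: "p \<noteq> i" using third by blast
    obtain f where f: "f \<in> Mor i p" using neM[OF offR[OF p[symmetric]]] by blast
    have "compose (X i) (restrict (inv_into (X i) f) (X p)) f = restrict id (X i)"
      using L1[OF bijM(1)[OF offR[OF p[symmetric]] f]] .
    moreover have "restrict (inv_into (X i) f) (X p) \<in> Mor p i" using invM[OF p[symmetric] f] .
    ultimately show ?thesis using f p unfolding Md_def by (intro CollectI exI[of _ f] exI[of _ "restrict (inv_into (X i) f) (X p)"] exI[of _ p]) simp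
  qed
  have Mdinv: "restrict (inv_into (X i) \<phi>) (X i) \<in> Md i" if hyp: "\<phi> \<in> Md i" for \<phi> i
  proof -
    obtain k f h where k: "k \<noteq> i" "f \<in> Mor i k" "h \<in> Mor k i" "\<phi> = compose (X i) h f"
      using hyp unfolding Md_def by blast
    have "restrict (inv_into (X i) \<phi>) (X i)
       = compose (X i) (restrict (inv_into (X i) f) (X k)) (restrict (inv_into (X k) h) (X i))"
      using L2[OF bijM(1)[OF offR[OF k(1)[symmetric]] k(2)] bijM(1)[OF offR[OF k(1)] k(3)]] k(4) by simp
    moreover have "restrict (inv_into (X i) f) (X k) \<in> Mor k i" using invM[OF k(1)[symmetric] k(2)] .
    moreover have "restrict (inv_into (X k) h) (X i) \<in> Mor i k" using invM[OF k(1) k(3)] .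
    ultimately show ?thesis using k(1) unfolding Md_def by blast
  qed
  have Mne: "M i j \<noteq> {}" for i j
    using neM Mdid unfolding M_def by auto
  have MB: "bij_betw f (X i) (X j) \<and> f \<in> extensional (X i)" if "f \<in> M i j" for f i j
  proof (cases "(i,j) \<in> R")
    case True then show ?thesis using that bijM unfolding M_def by auto
  next
    case False then have "i = j" using offR by blast
    then show ?thesis using that False MdB unfolding M_def by auto
  qed
  have Mid: "restrict id (X i) \<in> M i i" for i
    using idM Mdid unfolding M_def by auto
  have Minv: "restrict (inv_into (X i) f) (X j) \<in> M j i" if "f \<in> M i j" for f i j
  proof (cases "i = j")
    case True then show ?thesis using that Mdinv invR unfolding M_def by (auto split: if_splits)
  next
    case False then show ?thesis using that invM offR unfolding M_def by auto
  qed
  have Mcomp: "compose (X i) g f \<in> M i k" if hf: "f \<in> M i j" and hg: "g \<in> M j k" for f g i j k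
  proof (cases "(i,j) \<in> R \<and> (j,k) \<in> R \<and> (i,k) \<in> R")
    case True
    then have "f \<in> Mor i j" "g \<in> Mor j k" using hf hg unfolding M_def by auto
    then show ?thesis using True compR unfolding M_def by auto
  next
    case False
    show ?thesis
    proof (cases "i = j")
      case ij: True
      show ?thesis
      proof (cases "j = k")
        case True
        then have nR: "(i,i) \<notin> R" using ij False by auto
        have "f \<in> Md i" "g \<in> Md i" using hf hg nR ij True unfolding M_def by auto
        then show ?thesis using DD nR ij True unfolding M_def by auto
      next
        case jk: False
        then have nR: "(i,i) \<notin> R" using ij False offR by auto
        have "f \<in> Md i" "g \<in> Mor i k" using hf hg nR ij jk offR unfolding M_def by auto
        then have "compose (X i) g f \<in> Mor i k" using P ij jk by auto
        then show ?thesis using offR ij jk unfolding M_def by auto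
      qed
    next
      case ij: False
      show ?thesis
      proof (cases "j = k")
        case True
        then have nR: "(j,j) \<notin> R" using ij False offR by auto
        have "g \<in> Md j" "f \<in> Mor i j" using hf hg nR ij True offR unfolding M_def by auto
        then have "compose (X i) g f \<in> Mor i j" using Q ij by auto
        then show ?thesis using offR ij True unfolding M_def by auto
      next
        case jk: False
        then have ik: "i = k" using False ij offR by blast
        then have nR: "(i,i) \<notin> R" using ij False offR by auto
        have "f \<in> Mor i j" "g \<in> Mor j i" using hf hg ij jk ik offR unfolding M_def by auto
        then have "compose (X i) g f \<in> Md i" using ij unfolding Md_def by (intro CollectI exI[of _ f] exI[of _ g] exI[of _ j]) auto
        then show ?thesis using nR ik unfolding M_def by auto
      qed
    qed
  qed
  have g1: "\<forall>i. X i \<noteq> {}" using gs by (elim conjE)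
  have "\<forall>i j. (i, j) \<in> R \<longrightarrow> M i j = Mor i j" unfolding M_def by auto
  moreover have "groupoid_spine X UNIV M"
    unfolding groupoid_spine_def
  proof (intro conjI allI impI ballI)
    fix i j f assume "f \<in> M i j" then show "bij_betw f (X i) (X j)" "f \<in> extensional (X i)" using MB by auto
  next
    fix i j f assume "f \<in> M i j" then show "restrict (inv_into (X i) f) (X j) \<in> M j i" using Minv by auto
  next
    fix i j k f g assume "f \<in> M i j" "g \<in> M j k" then show "compose (X i) g f \<in> M i k" using Mcomp by auto
  qed (use g1 Mne Mid in auto)
  ultimately show ?thesis unfolding extends_to_groupoid_def by blast
qed

end
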